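(* Let $S^{\circ}_{n'}=\langle s_{1'},s_2,\dots,s_{n-1}\rangle\le D_n$ and $\pi\in S^{\circ}_{n'}$. Let $\Phi(\pi)=\pi'^{(1)}\cdots\pi'^{(z)}$ be the standard OGS elementary factorization of $\Phi(\pi)\in S_n$, with $\pi'^{(v)}=\prod_{j=1}^{m^{(v)}}t_{h^{(v)}_j}^{\imath^{(v)}_j}$. For each $v$ let $\tau_v\in D_n$ be the element $\prod_{j=1}^{m^{(v)}}t_{h^{(v)}_j}^{\imath^{(v)}_j}$ computed in $D_n$. Then $\pi=\pi_1\cdot\pi_2\cdots\pi_z$, where $\pi_v=\tau_v$ if $\operatorname{maj}(\pi'^{(v)})=h^{(v)}_1$, and $\pi_v=w_{\operatorname{maj}(\pi'^{(v)})}\cdot\tau_v$ if $\operatorname{maj}(\pi'^{(v)})<h^{(v)}_1$.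
   Context: $D_n$ ($n\ge2$) is the Coxeter group with generators $s_{1'},s_1,\dots,s_{n-1}$ and relations $s^2=1$, $(s_i s_{i+1})^3=1$, $(s_is_j)^2=1$ for $|i-j|\ge 2$, $(s_{1'}s_2)^3=1$, $(s_{1'}s_i)^2=1$ for $i\ne 2$. In $D_n$ (and in $S_n$): $t_k=s_1\cdots s_{k-1}$; in $D_n$: $w_k=s_k s_{k-1}\cdots s_2 s_1 s_{1'} s_2\cdots s_k$ ($1\le k\le n-1$). $\Phi:D_n\to S_n$ is the homomorphism $s_{1'}\mapsto s_1$, $s_i\mapsto s_i$ ($S_n$ generated by $s_i=(i,i+1)$). Every $\sigma\in S_n$ has a unique standard OGS canonical form $t_2^{i_2}\cdots t_n^{i_n}$ ($0\le i_k<k$); writing only nonzero factors $\sigma=t_{k_1}^{i_{k_1}}\cdots t_{k_m}^{i_{k_m}}$, $\operatorname{maj}(\sigma)=\sum_j i_{k_j}$, and $\sigma$ is a standard OGS elementary element if $\sum_j i_{k_j}\le k_1$. The standard OGS elementary factorization of $\sigma$: $\sigma=\prod_{v=1}^{z}\sigma^{(v)}$ with $\sigma^{(v)}=\prod_{j=1}^{m^{(v)}}t_{h^{(v)}_j}^{\imath^{(v)}_j}$ in standard OGS canonical form, all $\imath^{(v)}_j>0$, $\operatorname{maj}(\sigma^{(1)})\le h^{(1)}_1$, and $h^{(v-1)}_{m^{(v-1)}}\le\operatorname{maj}(\sigma^{(v)})\le h^{(v)}_1$ for $2\le v\le z$, where $z$ is the minimal number for which such a presentation exists (it is unique). *)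

theory Defs
  imports Main
begin

text \<open>Abstract generator symbols: Gp stands for s_{1'}, G i for s_i.\<close>
datatype gen = Gp | G nat

definition sS :: "nat \<Rightarrow> nat \<Rightarrow> nat" where
  "sS i = (\<lambda>x. if x = i then i + 1 else if x = i + 1 then i else x)"

definition prodS :: "(nat \<Rightarrow> nat) list \<Rightarrow> nat \<Rightarrow> nat" where
  "prodS fs = foldr (\<circ>) fs id"

definition tS :: "nat \<Rightarrow> nat \<Rightarrow> nat" where
  "tS k = prodS (map sS [1..<k])"

text \<open>Exponent vectors of standard OGS canonical forms t_2^{i_2} ... t_n^{i_n}.\<close>
definition ogs_exp :: "nat \<Rightarrow> (nat \<Rightarrow> nat) \<Rightarrow> bool" where
  "ogs_exp n e \<longleftrightarrow> (\<forall>k. (2 \<le> k \<and> k \<le> n \<longrightarrow> e k < k) \<and> (\<not> (2 \<le> k \<and> k \<le> n) \<longrightarrow> e k = 0))"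

definition ogs_prod :: "nat \<Rightarrow> (nat \<Rightarrow> nat) \<Rightarrow> nat \<Rightarrow> nat" where
  "ogs_prod n e = prodS (map (\<lambda>k. tS k ^^ e k) [2..<n+1])"

definition maj :: "nat \<Rightarrow> (nat \<Rightarrow> nat) \<Rightarrow> nat" where
  "maj n \<sigma> = (\<Sum>k\<in>{2..n}. (THE e. ogs_exp n e \<and> \<sigma> = ogs_prod n e) k)"

text \<open>A factor is given as the list of its nonzero OGS factors (h_j, i_j), i.e.
  t_{h_1}^{i_1} ... t_{h_m}^{i_m}, required to be in standard OGS canonical form
  with all exponents positive.\<close>
definition factor_ok :: "nat \<Rightarrow> (nat \<times> nat) list \<Rightarrow> bool" where
  "factor_ok n f \<longleftrightarrow> f \<noteq> [] \<and> sorted_wrt (<) (map fst f) \<and>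
     (\<forall>(h, i) \<in> set f. 2 \<le> h \<and> h \<le> n \<and> 0 < i \<and> i < h)"

definition factorS :: "(nat \<times> nat) list \<Rightarrow> nat \<Rightarrow> nat" where
  "factorS f = prodS (map (\<lambda>(h, i). tS h ^^ i) f)"

text \<open>Presentation sigma = sigma^(1) ... sigma^(z) satisfying the conditions of an
  elementary factorization (without minimality).\<close>
definition elem_pres :: "nat \<Rightarrow> (nat \<Rightarrow> nat) \<Rightarrow> (nat \<times> nat) list list \<Rightarrow> bool" where
  "elem_pres n \<sigma> fs \<longleftrightarrow>
     (\<forall>f \<in> set fs. factor_ok n f) \<and>
     \<sigma> = prodS (map factorS fs) \<and>
     (fs \<noteq> [] \<longrightarrow> maj n (factorS (fs ! 0)) \<le> fst (hd (fs ! 0))) \<and>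
     (\<forall>v. 0 < v \<and> v < length fs \<longrightarrow>
        fst (last (fs ! (v - 1))) \<le> maj n (factorS (fs ! v)) \<and>
        maj n (factorS (fs ! v)) \<le> fst (hd (fs ! v)))"

definition elem_fact :: "nat \<Rightarrow> (nat \<Rightarrow> nat) \<Rightarrow> (nat \<times> nat) list list \<Rightarrow> bool" where
  "elem_fact n \<sigma> fs \<longleftrightarrow> elem_pres n \<sigma> fs \<and> (\<forall>gs. elem_pres n \<sigma> gs \<longrightarrow> length fs \<le> length gs)"

section \<open>The Coxeter group D_n, realised as even signed permutations of {+-1,...,+-n}\<close>

definition dS :: "nat \<Rightarrow> int \<Rightarrow> int" where
  "dS i = (\<lambda>x. if x = int i then int i + 1 else if x = int i + 1 then int i
              else if x = - int i then - (int i + 1) else if x = - (int i + 1) then - int i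
              else x)"

definition dP :: "int \<Rightarrow> int" where
  "dP = (\<lambda>x. if x = 1 then -2 else if x = 2 then -1 else if x = -1 then 2
              else if x = -2 then 1 else x)"

definition prodD :: "(int \<Rightarrow> int) list \<Rightarrow> int \<Rightarrow> int" where
  "prodD fs = foldr (\<circ>) fs id"

fun genD :: "gen \<Rightarrow> int \<Rightarrow> int" where
  "genD Gp = dP"
| "genD (G i) = dS i"

definition evalD :: "gen list \<Rightarrow> int \<Rightarrow> int" where
  "evalD ws = prodD (map genD ws)"

fun genPhi :: "gen \<Rightarrow> nat \<Rightarrow> nat" where
  "genPhi Gp = sS 1"
| "genPhi (G i) = sS i"

definition evalPhi :: "gen list \<Rightarrow> nat \<Rightarrow> nat" where
  "evalPhi ws = prodS (map genPhi ws)"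

definition tD :: "nat \<Rightarrow> int \<Rightarrow> int" where
  "tD k = prodD (map dS [1..<k])"

definition wD :: "nat \<Rightarrow> int \<Rightarrow> int" where
  "wD k = prodD (map dS (rev [1..<k+1]) @ [dP] @ map dS [2..<k+1])"

definition factorD :: "(nat \<times> nat) list \<Rightarrow> int \<Rightarrow> int" where
  "factorD f = prodD (map (\<lambda>(h, i). tD h ^^ i) f)"

end

theory Submission imports Defs begin

lemma prodS_Nil[simp]: "prodS [] = id" by (simp add: prodS_def)
lemma prodS_Cons[simp]: "prodS (f # fs) = f \<circ> prodS fs" by (simp add: prodS_def)
lemma prodS_append: "prodS (xs @ ys) = prodS xs \<circ> prodS ys"
  by (induction xs) (auto simp: comp_assoc)
lemma prodD_Nil[simp]: "prodD [] = id" by (simp add: prodD_def)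
lemma prodD_Cons[simp]: "prodD (f # fs) = f \<circ> prodD fs" by (simp add: prodD_def)
lemma prodD_append: "prodD (xs @ ys) = prodD xs \<circ> prodD ys"
  by (induction xs) (auto simp: comp_assoc)

lemma sS_invol: "sS i \<circ> sS i = id"
  by (auto simp: sS_def fun_eq_iff)
lemma bij_sS: "bij (sS i)"
  by (rule o_bij[OF sS_invol sS_invol])
lemma bij_prodS: "(\<forall>p\<in>set ps. bij p) \<Longrightarrow> bij (prodS ps)"
  by (induction ps) (auto intro: bij_comp)
lemma bij_funpow: "bij (p::nat\<Rightarrow>nat) \<Longrightarrow> bij (p ^^ k)"
  using bij_betw_funpow[of p UNIV k] by simp
lemma bij_tS: "bij (tS k)"
  unfolding tS_def by (rule bij_prodS) (auto simp: bij_sS)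

lemma tS_Suc: "1 \<le> k \<Longrightarrow> tS (Suc k) = tS k \<circ> sS k"
  by (simp add: tS_def prodS_append)

lemma tS_fix: "k < x \<Longrightarrow> tS k x = x"
proof (induction k)
  case 0 then show ?case by (simp add: tS_def)
next
  case (Suc k)
  show ?case
  proof (cases "k = 0")
    case True then show ?thesis by (simp add: tS_def)
  next
    case False
    then have "tS (Suc k) = tS k \<circ> sS k" by (simp add: tS_Suc)
    then show ?thesis using Suc by (simp add: sS_def)
  qed
qed

lemma tS_lt: "1 \<le> x \<Longrightarrow> x < k \<Longrightarrow> tS k x = x + 1"
proof (induction k)
  case 0 then show ?case by simp
next
  case (Suc k)
  then have k1: "1 \<le> k" by simp
  have e: "tS (Suc k) = tS k \<circ> sS k" using k1 by (simp add: tS_Suc)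
  show ?case
  proof (cases "x < k")
    case True then show ?thesis using Suc e by (simp add: sS_def)
  next
    case False then have "x = k" using Suc by simp
    then show ?thesis using e by (simp add: sS_def tS_fix)
  qed
qed

lemma tS_top: "1 \<le> k \<Longrightarrow> tS k k = 1"
proof (induction k)
  case 0 then show ?case by simp
next
  case (Suc k)
  show ?case
  proof (cases "k = 0")
    case True then show ?thesis by (simp add: tS_def)
  next
    case False
    then have "tS (Suc k) = tS k \<circ> sS k" by (simp add: tS_Suc)
    then show ?thesis using Suc False by (simp add: sS_def)
  qed
qed

lemma tS_pow_lt: "1 \<le> x \<Longrightarrow> x + j \<le> h \<Longrightarrow> (tS h ^^ j) x = x + j"
  by (induction j) (auto simp: tS_lt)

lemma tS_pow_wrap: "1 \<le> x \<Longrightarrow> x + j = h + 1 \<Longrightarrow> 0 < j \<Longrightarrow> (tS h ^^ j) x = 1"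
proof -
  assume a: "1 \<le> x" "x + j = h + 1" "0 < j"
  then obtain j' where j: "j = Suc j'" by (cases j) auto
  have "(tS h ^^ j) x = tS h ((tS h ^^ j') x)" using j by simp
  also have "(tS h ^^ j') x = h" using a j tS_pow_lt[of x j' h] by simp
  finally show ?thesis using a tS_top[of h] by simp
qed

lemma tS_pow_hit: "a < N \<Longrightarrow> (tS N ^^ a) (N - a) = N"
  using tS_pow_lt[of "N - a" a N] by simp

lemma prodS_fix: "(\<forall>p\<in>set ps. p x = x) \<Longrightarrow> prodS ps x = x"
  by (induction ps) auto

lemma funpow_fix: "p x = x \<Longrightarrow> (p ^^ j) x = x"
  by (induction j) auto

lemma ogs_prod_fix: "n < x \<Longrightarrow> ogs_prod n e x = x"
  unfolding ogs_prod_def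
  by (rule prodS_fix) (auto intro!: funpow_fix tS_fix)

lemma ogs_prod_Suc: "1 \<le> n \<Longrightarrow> ogs_prod (Suc n) e = ogs_prod n e \<circ> (tS (Suc n) ^^ e (Suc n))"
  by (simp add: ogs_prod_def prodS_append)

lemma ogs_prod_upd: "ogs_prod n (e(Suc n := 0)) = ogs_prod n e"
  unfolding ogs_prod_def by (rule arg_cong[where f=prodS]) auto

lemma ogs_exp_upd: "ogs_exp (Suc n) e \<Longrightarrow> ogs_exp n (e(Suc n := 0))"
proof -
  assume a: "ogs_exp (Suc n) e"
  show ?thesis unfolding ogs_exp_def
  proof
    fix k
    from a have h: "(2 \<le> k \<and> k \<le> Suc n \<longrightarrow> e k < k) \<and> (\<not> (2 \<le> k \<and> k \<le> Suc n) \<longrightarrow> e k = 0)"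
      unfolding ogs_exp_def by blast
    show "(2 \<le> k \<and> k \<le> n \<longrightarrow> (e(Suc n := 0)) k < k) \<and> (\<not> (2 \<le> k \<and> k \<le> n) \<longrightarrow> (e(Suc n := 0)) k = 0)"
      using h by (cases "k = Suc n") auto
  qed
qed

lemma ogs_unique: "ogs_exp n e \<Longrightarrow> ogs_exp n e' \<Longrightarrow> ogs_prod n e = ogs_prod n e' \<Longrightarrow> e = e'"
proof (induction n arbitrary: e e')
  case 0
  then show ?case by (auto simp: ogs_exp_def fun_eq_iff)
next
  case (Suc n)
  show ?case
  proof (cases "n = 0")
    case True
    then show ?thesis using Suc.prems by (auto simp: ogs_exp_def fun_eq_iff)
  next
    case False
    let ?N = "Suc n"
    define a where "a = e ?N"
    define b where "b = e' ?N"
    have aN: "a < ?N" using Suc.prems(1) False by (auto simp: ogs_exp_def a_def)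
    have bN: "b < ?N" using Suc.prems(2) False by (auto simp: ogs_exp_def b_def)
    have s1: "ogs_prod ?N e = ogs_prod n e \<circ> (tS ?N ^^ a)" using False by (simp add: ogs_prod_Suc a_def)
    have s2: "ogs_prod ?N e' = ogs_prod n e' \<circ> (tS ?N ^^ b)" using False by (simp add: ogs_prod_Suc b_def)
    have bij: "bij (ogs_prod ?N e)" unfolding ogs_prod_def
      by (rule bij_prodS) (auto intro!: bij_funpow bij_tS)
    have h1: "ogs_prod ?N e (?N - a) = ?N" using s1 aN tS_pow_hit[OF aN] ogs_prod_fix[of n ?N e] by simp
    have h2: "ogs_prod ?N e (?N - b) = ?N" using s2 bN tS_pow_hit[OF bN] ogs_prod_fix[of n ?N e'] Suc.prems(3) by simp
    have "?N - a = ?N - b" using injD[OF bij_is_inj[OF bij], of "?N - a" "?N - b"] h1 h2 by simp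
    then have ab: "a = b" using aN bN by simp
    have c: "ogs_prod n e \<circ> (tS ?N ^^ a) = ogs_prod n e' \<circ> (tS ?N ^^ a)"
      using Suc.prems(3) by (simp only: s1 s2 ab)
    have sj: "surj (tS ?N ^^ a)" using bij_funpow[OF bij_tS] by (rule bij_is_surj)
    have "ogs_prod n e = ogs_prod n e'"
    proof
      fix y
      obtain z where z: "y = (tS ?N ^^ a) z" using surjD[OF sj] by blast
      show "ogs_prod n e y = ogs_prod n e' y" using fun_cong[OF c, of z] z by simp
    qed
    then have eq: "e(?N := 0) = e'(?N := 0)"
      using Suc.IH[OF ogs_exp_upd[OF Suc.prems(1)] ogs_exp_upd[OF Suc.prems(2)]]
      by (simp only: ogs_prod_upd)
    show ?thesis
    proof
      fix k
      show "e k = e' k" using fun_cong[OF eq, of k] ab a_def b_def by (cases "k = ?N") auto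
    qed
  qed
qed


definition Ef :: "(nat \<times> nat) list \<Rightarrow> nat \<Rightarrow> nat" where
  "Ef f k = (case map_of f k of None \<Rightarrow> 0 | Some i \<Rightarrow> i)"

lemma prodS_ids: "(\<forall>p\<in>set ps. p = id) \<Longrightarrow> prodS ps = id"
  by (induction ps) auto

lemma prodS_map_id: "prodS (map (\<lambda>k x. x) xs) = (\<lambda>x. x)"
  by (induction xs) (auto simp: comp_def)

lemma Ef_lemma:
  "sorted_wrt (<) (map fst f) \<Longrightarrow> (\<forall>(h,i)\<in>set f. a \<le> h \<and> h < b) \<Longrightarrow>
   prodS (map (\<lambda>k. tS k ^^ Ef f k) [a..<b]) = prodS (map (\<lambda>(h,i). tS h ^^ i) f) \<and>
   sum_list (map (Ef f) [a..<b]) = sum_list (map snd f)"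
proof (induction f arbitrary: a)
  case Nil
  then show ?case by (auto simp: Ef_def id_def prodS_map_id)
next
  case (Cons hi rest)
  obtain h i where hi: "hi = (h, i)" by fastforce
  have ab: "a \<le> h" "h < b" using Cons.prems hi by auto
  have srt: "sorted_wrt (<) (map fst rest)" and gt: "\<forall>(h',i')\<in>set rest. h < h'"
    using Cons.prems(1) hi by auto
  have rng: "\<forall>(h',i')\<in>set rest. Suc h \<le> h' \<and> h' < b" using gt Cons.prems(2) by auto
  have none: "map_of rest k = None" if "k \<le> h" for k
  proof (rule ccontr)
    assume "map_of rest k \<noteq> None"
    then obtain j where "map_of rest k = Some j" by auto
    then have "(k, j) \<in> set rest" by (rule map_of_SomeD)
    then show False using gt that by auto
  qed
  have E1: "Ef (hi # rest) k = 0" if "k < h" for k using none[of k] that hi by (simp add: Ef_def)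
  have E2: "Ef (hi # rest) h = i" using hi by (simp add: Ef_def)
  have E3: "Ef (hi # rest) k = Ef rest k" if "h < k" for k using that hi by (simp add: Ef_def)
  have split: "[a..<b] = [a..<h] @ h # [Suc h..<b]"
  proof -
    have "[a..<b] = [a..<h] @ [h..<b]" using ab upt_add_eq_append[of a h "b - h"] by simp
    then show ?thesis using ab upt_conv_Cons[of h b] by simp
  qed
  have m1: "map (\<lambda>k. tS k ^^ Ef (hi # rest) k) [a..<h] = map (\<lambda>k. id) [a..<h]"
    using E1 by auto
  have m1': "map (Ef (hi # rest)) [a..<h] = map (\<lambda>k. 0) [a..<h]"
    using E1 by auto
  have m3: "map (\<lambda>k. tS k ^^ Ef (hi # rest) k) [Suc h..<b] = map (\<lambda>k. tS k ^^ Ef rest k) [Suc h..<b]"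
    using E3 by auto
  have m3': "map (Ef (hi # rest)) [Suc h..<b] = map (Ef rest) [Suc h..<b]"
    using E3 by auto
  have ids: "prodS (map (\<lambda>k. id) [a..<h]) = id" by (rule prodS_ids) auto
  have sz: "sum_list (map (\<lambda>k. 0::nat) [a..<h]) = 0" by (induction "[a..<h]") auto
  note IH = Cons.IH[OF srt rng]
  have P: "prodS (map (\<lambda>k. tS k ^^ Ef (hi # rest) k) [a..<b]) = prodS (map (\<lambda>(h,i). tS h ^^ i) (hi # rest))"
  proof -
    have "prodS (map (\<lambda>k. tS k ^^ Ef (hi # rest) k) [a..<b]) =
      prodS (map (\<lambda>k. id) [a..<h]) \<circ> ((tS h ^^ i) \<circ> prodS (map (\<lambda>k. tS k ^^ Ef rest k) [Suc h..<b]))"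
      unfolding split map_append list.map prodS_append prodS_Cons m1 m3 E2 by (rule refl)
    also have "\<dots> = prodS (map (\<lambda>(h,i). tS h ^^ i) (hi # rest))"
      unfolding ids using IH hi by simp
    finally show ?thesis .
  qed
  have S: "sum_list (map (Ef (hi # rest)) [a..<b]) = sum_list (map snd (hi # rest))"
  proof -
    have "sum_list (map (Ef (hi # rest)) [a..<b]) =
      sum_list (map (\<lambda>k. 0) [a..<h]) + (i + sum_list (map (Ef rest) [Suc h..<b]))"
      unfolding split map_append list.map sum_list_append sum_list.Cons m1' m3' E2 by (rule refl)
    also have "\<dots> = sum_list (map snd (hi # rest))"
      unfolding sz using IH hi by simp
    finally show ?thesis .
  qed
  show ?case using P S by blast
qed

lemma factor_ogs:
  assumes "factor_ok n f"
  shows "ogs_exp n (Ef f)" "factorS f = ogs_prod n (Ef f)"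
    "maj n (factorS f) = sum_list (map snd f)"
proof -
  have srt: "sorted_wrt (<) (map fst f)" and rng: "\<forall>(h,i)\<in>set f. 2 \<le> h \<and> h \<le> n \<and> 0 < i \<and> i < h"
    using assms by (auto simp: factor_ok_def)
  have rng2: "\<forall>(h,i)\<in>set f. 2 \<le> h \<and> h < Suc n" using rng by auto
  note L = Ef_lemma[OF srt rng2]
  show ex: "ogs_exp n (Ef f)"
    unfolding ogs_exp_def
  proof (intro allI conjI impI)
    fix k assume k: "2 \<le> k \<and> k \<le> n"
    show "Ef f k < k"
    proof (cases "map_of f k")
      case None then show ?thesis using k by (simp add: Ef_def)
    next
      case (Some j) then have "(k, j) \<in> set f" by (rule map_of_SomeD)
      then show ?thesis using rng Some by (auto simp: Ef_def)
    qed
  next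
    fix k assume k: "\<not> (2 \<le> k \<and> k \<le> n)"
    show "Ef f k = 0"
    proof (cases "map_of f k")
      case None then show ?thesis by (simp add: Ef_def)
    next
      case (Some j) then have "(k, j) \<in> set f" by (rule map_of_SomeD)
      then show ?thesis using rng k by auto
    qed
  qed
  show eq: "factorS f = ogs_prod n (Ef f)"
    using L by (simp add: factorS_def ogs_prod_def)
  have "(THE e. ogs_exp n e \<and> factorS f = ogs_prod n e) = Ef f"
    using ex eq ogs_unique by (intro the_equality) auto
  moreover have "(\<Sum>k\<in>{2..n}. Ef f k) = sum_list (map snd f)"
  proof -
    have "{2..n} = set [2..<Suc n]" by auto
    then have "(\<Sum>k\<in>{2..n}. Ef f k) = sum_list (map (Ef f) [2..<Suc n])"
      by (simp only: sum_set_upt_conv_sum_list_nat)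
    then show ?thesis using L by simp
  qed
  ultimately show "maj n (factorS f) = sum_list (map snd f)"
    by (simp add: maj_def)
qed

lemma factor_one:
  "f \<noteq> [] \<Longrightarrow> sorted_wrt (<) (map fst f) \<Longrightarrow> (\<forall>(h,i)\<in>set f. 0 < i \<and> i < h) \<Longrightarrow>
   sum_list (map snd f) \<le> fst (hd f) \<Longrightarrow>
   factorS f 1 = (if sum_list (map snd f) = fst (hd f) then 1 else sum_list (map snd f) + 1)"
proof (induction f)
  case Nil then show ?case by simp
next
  case (Cons hi rest)
  obtain h i where hi: "hi = (h, i)" by fastforce
  have ih: "0 < i" "i < h" using Cons.prems hi by auto
  show ?case
  proof (cases "rest = []")
    case True
    then show ?thesis using hi ih tS_pow_lt[of 1 i h] by (simp add: factorS_def)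
  next
    case False
    obtain h' i' rest' where r: "rest = (h', i') # rest'" using False by (metis list.exhaust prod.exhaust)
    have hh: "h < h'" using Cons.prems(2) hi r by auto
    have s: "sum_list (map snd rest) + i \<le> h" using Cons.prems(4) hi by simp
    have "factorS rest 1 = sum_list (map snd rest) + 1"
      using Cons.IH[OF False] Cons.prems hi r hh s by auto
    moreover have "factorS (hi # rest) 1 = (tS h ^^ i) (factorS rest 1)"
      using hi by (simp add: factorS_def)
    ultimately show ?thesis
      using hi s ih tS_pow_lt[of "sum_list (map snd rest) + 1" i h]
        tS_pow_wrap[of "sum_list (map snd rest) + 1" i h] by auto
  qed
qed


definition Pos :: "(nat \<Rightarrow> nat) \<Rightarrow> bool" where
  "Pos p \<longleftrightarrow> (\<forall>k>0. 0 < p k)"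

definition U :: "(nat \<Rightarrow> nat) \<Rightarrow> int \<Rightarrow> int" where
  "U p x = sgn x * int (p (nat \<bar>x\<bar>))"

definition eps :: "int \<Rightarrow> int" where
  "eps x = (if x = 1 \<or> x = -1 then -x else x)"

definition L :: "(nat \<Rightarrow> nat) \<Rightarrow> int \<Rightarrow> int" where
  "L p = eps \<circ> U p \<circ> eps"

lemma eps_eps: "eps \<circ> eps = id" by (auto simp: eps_def fun_eq_iff)

lemma Pos_comp: "Pos p \<Longrightarrow> Pos q \<Longrightarrow> Pos (p \<circ> q)" by (auto simp: Pos_def)
lemma Pos_id: "Pos id" by (auto simp: Pos_def)
lemma Pos_sS: "1 \<le> i \<Longrightarrow> Pos (sS i)" by (auto simp: Pos_def sS_def)
lemma Pos_funpow: "Pos p \<Longrightarrow> Pos (p ^^ k)" by (induction k) (auto simp: Pos_id Pos_comp)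
lemma Pos_prodS: "(\<forall>p\<in>set ps. Pos p) \<Longrightarrow> Pos (prodS ps)"
  by (induction ps) (auto simp: Pos_id Pos_comp)
lemma Pos_tS: "Pos (tS k)" unfolding tS_def by (rule Pos_prodS) (auto simp: Pos_sS)

lemma U_comp: "Pos q \<Longrightarrow> U (p \<circ> q) = U p \<circ> U q"
proof
  fix x :: int assume q: "Pos q"
  show "U (p \<circ> q) x = (U p \<circ> U q) x"
  proof (cases "x = 0")
    case True then show ?thesis by (simp add: U_def)
  next
    case False
    then have "0 < q (nat \<bar>x\<bar>)" using q by (auto simp: Pos_def)
    then show ?thesis using False by (auto simp: U_def sgn_if abs_mult)
  qed
qed

lemma U_id: "U id = id" by (auto simp: U_def fun_eq_iff sgn_if)

lemma eps_eps_app: "eps (eps x) = x" by (simp add: eps_def)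

lemma L_comp: "Pos q \<Longrightarrow> L (p \<circ> q) = L p \<circ> L q"
  by (simp add: L_def U_comp fun_eq_iff eps_eps_app)

lemma L_id: "L id = id" by (simp add: L_def U_id eps_eps)

lemma U_prodS: "(\<forall>p\<in>set ps. Pos p) \<Longrightarrow> prodD (map U ps) = U (prodS ps)"
  by (induction ps) (auto simp: U_id U_comp Pos_prodS)

lemma L_prodS: "(\<forall>p\<in>set ps. Pos p) \<Longrightarrow> prodD (map L ps) = L (prodS ps)"
  by (induction ps) (auto simp: L_id L_comp Pos_prodS)

lemma U_funpow: "Pos p \<Longrightarrow> U p ^^ k = U (p ^^ k)"
  by (induction k) (auto simp: U_id U_comp Pos_funpow)

lemma dS_U: "1 \<le> i \<Longrightarrow> dS i = U (sS i)"
  by (auto simp: dS_def U_def sS_def fun_eq_iff sgn_if nat_eq_iff)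

lemma dS_L: "2 \<le> i \<Longrightarrow> dS i = L (sS i)"
  by (auto simp: dS_def U_def sS_def L_def eps_def fun_eq_iff sgn_if nat_eq_iff)

lemma dP_L: "dP = L (sS 1)"
  by (auto simp: dP_def U_def sS_def L_def eps_def fun_eq_iff sgn_if nat_eq_iff)

lemma tD_U: "tD h = U (tS h)"
proof -
  have m: "map dS [1..<h] = map U (map sS [1..<h])" by (auto simp: dS_U)
  show ?thesis unfolding tD_def tS_def m by (rule U_prodS) (auto simp: Pos_sS)
qed

lemma factorD_U: "factorD f = U (factorS f)"
proof -
  have "map (\<lambda>(h, i). tD h ^^ i) f = map U (map (\<lambda>(h, i). tS h ^^ i) f)"
    by (auto simp: tD_U U_funpow Pos_tS)
  then show ?thesis unfolding factorD_def factorS_def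
    by (simp only:) (rule U_prodS, auto simp: Pos_funpow Pos_tS)
qed

lemma evalD_L:
  "\<forall>g\<in>set ws. g = Gp \<or> (\<exists>i. g = G i \<and> 2 \<le> i) \<Longrightarrow> evalD ws = L (evalPhi ws)"
proof -
  assume a: "\<forall>g\<in>set ws. g = Gp \<or> (\<exists>i. g = G i \<and> 2 \<le> i)"
  have "map genD ws = map L (map genPhi ws)" using a by (auto simp: dP_L dS_L)
  moreover have "\<forall>p\<in>set (map genPhi ws). Pos p" using a by (auto simp: Pos_sS)
  ultimately show ?thesis unfolding evalD_def evalPhi_def by (simp only: L_prodS)
qed

definition W :: "nat \<Rightarrow> int \<Rightarrow> int" where
  "W k x = (if \<bar>x\<bar> = 1 \<or> \<bar>x\<bar> = int k + 1 then -x else x)"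

lemma wD_rec: "1 \<le> k \<Longrightarrow> wD (Suc k) = dS (Suc k) \<circ> wD k \<circ> dS (Suc k)"
  by (simp add: wD_def prodD_append comp_assoc)

lemma wD_W: "1 \<le> k \<Longrightarrow> wD k = W k"
proof (induction k rule: dec_induct)
  case base
  show ?case by (auto simp: wD_def dS_def dP_def W_def fun_eq_iff)
next
  case (step k)
  then show ?case by (auto simp: wD_rec dS_def W_def fun_eq_iff)
qed


lemma conj_fix: "inj s \<Longrightarrow> s 1 = 1 \<Longrightarrow> eps \<circ> U s \<circ> eps = U s"
proof
  fix x :: int assume i: "inj s" and s1: "s 1 = 1"
  have ne: "s (nat \<bar>x\<bar>) \<noteq> 1" if "\<bar>x\<bar> \<noteq> 1" using i s1 that injD[OF i, of "nat \<bar>x\<bar>" 1] by auto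
  show "(eps \<circ> U s \<circ> eps) x = U s x"
  proof (cases "\<bar>x\<bar> = 1")
    case True then show ?thesis using s1 by (auto simp: eps_def U_def abs_if split: if_splits)
  next
    case False
    then have "\<bar>U s x\<bar> \<noteq> 1" using ne[OF False] by (auto simp: U_def abs_mult sgn_if)
    then show ?thesis using False by (auto simp: eps_def)
  qed
qed

lemma conj_move: "inj s \<Longrightarrow> s 1 = M + 1 \<Longrightarrow> 1 \<le> M \<Longrightarrow> W M \<circ> U s = eps \<circ> U s \<circ> eps"
proof
  fix x :: int assume i: "inj s" and s1: "s 1 = M + 1" and M: "1 \<le> M"
  have ne: "s (nat \<bar>x\<bar>) \<noteq> M + 1" if "\<bar>x\<bar> \<noteq> 1" using i s1 that injD[OF i, of "nat \<bar>x\<bar>" 1] by auto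
  show "(W M \<circ> U s) x = (eps \<circ> U s \<circ> eps) x"
  proof (cases "\<bar>x\<bar> = 1")
    case True then show ?thesis using s1 M by (auto simp: eps_def U_def W_def abs_if split: if_splits)
  next
    case False
    then have "\<bar>U s x\<bar> \<noteq> int M + 1" using ne[OF False] by (auto simp: U_def abs_mult sgn_if)
    then show ?thesis using False by (auto simp: eps_def W_def)
  qed
qed

lemma factor_main:
  assumes ok: "factor_ok n f" and le: "maj n (factorS f) \<le> fst (hd f)"
  shows "(if maj n (factorS f) = fst (hd f) then factorD f
          else wD (maj n (factorS f)) \<circ> factorD f) = L (factorS f)"
proof -
  define M where "M = sum_list (map snd f)"
  have mj: "maj n (factorS f) = M" using factor_ogs(3)[OF ok] M_def by simp
  have ne: "f \<noteq> []" and srt: "sorted_wrt (<) (map fst f)"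
    and rng: "\<forall>(h,i)\<in>set f. 0 < i \<and> i < h" using ok by (auto simp: factor_ok_def)
  have s1: "factorS f 1 = (if M = fst (hd f) then 1 else M + 1)"
    using factor_one[OF ne srt rng] le mj M_def by simp
  have inj: "inj (factorS f)" unfolding factorS_def
    by (rule bij_is_inj, rule bij_prodS) (auto intro!: bij_funpow bij_tS)
  have M1: "1 \<le> M"
  proof -
    obtain h i f' where "f = (h, i) # f'" using ne by (metis list.exhaust prod.exhaust)
    then show ?thesis using rng M_def by auto
  qed
  show ?thesis
  proof (cases "M = fst (hd f)")
    case True
    then show ?thesis using mj s1 conj_fix[OF inj] by (simp add: factorD_U L_def)
  next
    case False
    then show ?thesis using mj s1 conj_move[OF inj _ M1] wD_W[OF M1] by (simp add: factorD_U L_def)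
  qed
qed

theorem mainTheorem10:
  fixes n :: nat and ws :: "gen list" and fs :: "(nat \<times> nat) list list"
  assumes "n \<ge> 2"
    and "\<forall>g \<in> set ws. g = Gp \<or> (\<exists>i. g = G i \<and> 2 \<le> i \<and> i \<le> n - 1)"
    and "elem_fact n (evalPhi ws) fs"
  shows "evalD ws =
           prodD (map (\<lambda>f. if maj n (factorS f) = fst (hd f) then factorD f
                           else wD (maj n (factorS f)) \<circ> factorD f) fs)"
proof -
  have ep: "elem_pres n (evalPhi ws) fs" using assms(3) by (simp add: elem_fact_def)
  have oks: "\<forall>f\<in>set fs. factor_ok n f" and ev: "evalPhi ws = prodS (map factorS fs)"
    using ep by (auto simp: elem_pres_def)
  have c0: "fs \<noteq> [] \<longrightarrow> maj n (factorS (fs ! 0)) \<le> fst (hd (fs ! 0))"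
    using ep unfolding elem_pres_def by blast
  have cv: "\<forall>v. 0 < v \<and> v < length fs \<longrightarrow>
        fst (last (fs ! (v - 1))) \<le> maj n (factorS (fs ! v)) \<and>
        maj n (factorS (fs ! v)) \<le> fst (hd (fs ! v))"
    using ep unfolding elem_pres_def by blast
  have mjs: "maj n (factorS f) \<le> fst (hd f)" if f_in: "f \<in> set fs" for f
  proof -
    obtain v where v: "v < length fs" "fs ! v = f" using f_in by (auto simp: in_set_conv_nth)
    show ?thesis
    proof (cases "v = 0")
      case True
      then have "fs \<noteq> []" using v by auto
      then show ?thesis using c0 v True by simp
    next
      case False
      then show ?thesis using cv v by auto
    qed
  qed
  have m: "map (\<lambda>f. if maj n (factorS f) = fst (hd f) then factorD f
                 else wD (maj n (factorS f)) \<circ> factorD f) fs = map L (map factorS fs)"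
    using factor_main oks mjs by auto
  have ps: "\<forall>p\<in>set (map factorS fs). Pos p"
    by (auto simp: factorS_def intro!: Pos_prodS Pos_funpow Pos_tS)
  have "evalD ws = L (evalPhi ws)"
    using assms(2) by (intro evalD_L) auto
  also have "\<dots> = L (prodS (map factorS fs))" using ev by (rule arg_cong)
  also have "\<dots> = prodD (map L (map factorS fs))" using L_prodS[OF ps] by (rule sym)
  finally show ?thesis unfolding m .
qed

end
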